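(* Let $G=(N,A)$ be a directed graph with arc capacities $u_{ij}\ge0$, and suppose there is a single commodity ($K=\{1\}$) with origin $O(1)$ and destination $D(1)$. Fix $\bar y\in\{0,1\}^{|A|}$ and a scenario $\bar s$ with demand $d^1(\omega_{\bar s})\ge0$, and assume $\bar y$ is not feasible for $\bar s$. Let $\mathcal C$ be the set of all $(O(1),D(1))$ cuts in $G$ and let $$C^*_{\mathrm{SNC}}\in\arg\max_{C\in\mathcal C}\frac{d^1(\omega_{\bar s})-\sum_{(i,j)\in C}u_{ij}\bar y_{ij}}{|C|+1}.$$ Then there is an optimal solution $(\mu^*,\pi^*,\lambda^* )$ of the SNC dual program at $(\bar y,\omega_{\bar s})$ whose derived feasibility cut $d^1(\omega_{\bar s})\lambda^{1*}-\sum_{(i,j)\in A}u_{ij}\pi^*_{ij}y_{ij}\le0$ (in variables $y$) is equivalent to $$\sum_{(i,j)\in C^*_{\mathrm{SNC}}}u_{ij}y_{ij}\ge d^1(\omega_{\bar s}).$$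
   Context: Admissible arcs for commodity 1: $A^1=\{(i,j)\in A: j\neq O(1),\ i\neq D(1)\}$. Feasibility: $\bar y$ is feasible for scenario $\bar s$ if there exist flows $x^1_{ij}\ge0$, $(i,j)\in A^1$, with flow conservation at every $i\notin\{O(1),D(1)\}$, capacities $x^1_{ij}\le u_{ij}\bar y_{ij}$, and inflow into $D(1)$ at least $d^1(\omega_{\bar s})$. An $(O(1),D(1))$ cut is an arc set $\{(i,j)\in A: i\in W, j\notin W\}$ for some $W\subseteq N$ with $O(1)\in W$, $D(1)\notin W$. The SNC dual program at $(y,\omega)$: maximize $d^1(\omega)\lambda^1-\sum_{(i,j)\in A}u_{ij}y_{ij}\pi_{ij}$ over $\mu^1_i$ free ($i\in N$), $\pi_{ij}\ge0$, $\lambda^1\ge0$, subject to $\mu^1_{O(1)}=0$, $\mu^1_{D(1)}=\lambda^1$, $\pi_{ij}\ge\mu^1_j-\mu^1_i$ for all $(i,j)\in A^1$, and $\sum_{(i,j)\in A}\pi_{ij}+\lambda^1\le1$. "Equivalent" means the two inequalities define the same set of $y$ (they coincide up to a positive scalar multiple). *)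

theory Defs
  imports Main "HOL-Library.Indicator_Function"
begin

definition adm_arcs :: "('n \<times> 'n) set \<Rightarrow> 'n \<Rightarrow> 'n \<Rightarrow> ('n \<times> 'n) set" where
  "adm_arcs A orig dest = {(i,j) \<in> A. j \<noteq> orig \<and> i \<noteq> dest}"

definition feasible ::
  "'n set \<Rightarrow> ('n \<times> 'n) set \<Rightarrow> ('n \<times> 'n \<Rightarrow> real) \<Rightarrow> 'n \<Rightarrow> 'n \<Rightarrow> real
     \<Rightarrow> ('n \<times> 'n \<Rightarrow> real) \<Rightarrow> bool" where
  "feasible N A u orig dest dem y \<longleftrightarrow>
     (\<exists>x :: 'n \<times> 'n \<Rightarrow> real.
        (\<forall>a \<in> adm_arcs A orig dest. 0 \<le> x a \<and> x a \<le> u a * y a) \<and>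
        (\<forall>i \<in> N - {orig, dest}.
            (\<Sum>a \<in> {a \<in> adm_arcs A orig dest. snd a = i}. x a) =
            (\<Sum>a \<in> {a \<in> adm_arcs A orig dest. fst a = i}. x a)) \<and>
        (\<Sum>a \<in> {a \<in> adm_arcs A orig dest. snd a = dest}. x a) \<ge> dem)"

definition od_cuts :: "'n set \<Rightarrow> ('n \<times> 'n) set \<Rightarrow> 'n \<Rightarrow> 'n \<Rightarrow> ('n \<times> 'n) set set" where
  "od_cuts N A orig dest =
     {{(i,j) \<in> A. i \<in> W \<and> j \<notin> W} | W. W \<subseteq> N \<and> orig \<in> W \<and> dest \<notin> W}"

definition snc_ratio ::
  "('n \<times> 'n \<Rightarrow> real) \<Rightarrow> real \<Rightarrow> ('n \<times> 'n \<Rightarrow> real) \<Rightarrow> ('n \<times> 'n) set \<Rightarrow> real" where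
  "snc_ratio u dem y C = (dem - (\<Sum>a \<in> C. u a * y a)) / (real (card C) + 1)"

definition snc_dual_feasible ::
  "('n \<times> 'n) set \<Rightarrow> 'n \<Rightarrow> 'n \<Rightarrow> ('n \<Rightarrow> real) \<Rightarrow> ('n \<times> 'n \<Rightarrow> real) \<Rightarrow> real \<Rightarrow> bool" where
  "snc_dual_feasible A orig dest mu pii lam \<longleftrightarrow>
     mu orig = 0 \<and> mu dest = lam \<and> 0 \<le> lam \<and>
     (\<forall>a \<in> A. 0 \<le> pii a) \<and>
     (\<forall>(i,j) \<in> adm_arcs A orig dest. pii (i,j) \<ge> mu j - mu i) \<and>
     (\<Sum>a \<in> A. pii a) + lam \<le> 1"

definition snc_dual_obj ::
  "('n \<times> 'n) set \<Rightarrow> ('n \<times> 'n \<Rightarrow> real) \<Rightarrow> real \<Rightarrow> ('n \<times> 'n \<Rightarrow> real)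
     \<Rightarrow> ('n \<times> 'n \<Rightarrow> real) \<Rightarrow> real \<Rightarrow> real" where
  "snc_dual_obj A u dem y pii lam = dem * lam - (\<Sum>a \<in> A. u a * y a * pii a)"

definition snc_dual_optimal ::
  "('n \<times> 'n) set \<Rightarrow> ('n \<times> 'n \<Rightarrow> real) \<Rightarrow> 'n \<Rightarrow> 'n \<Rightarrow> real \<Rightarrow> ('n \<times> 'n \<Rightarrow> real)
     \<Rightarrow> ('n \<Rightarrow> real) \<Rightarrow> ('n \<times> 'n \<Rightarrow> real) \<Rightarrow> real \<Rightarrow> bool" where
  "snc_dual_optimal A u orig dest dem y mu pii lam \<longleftrightarrow>
     snc_dual_feasible A orig dest mu pii lam \<and>
     (\<forall>mu' pii' lam'. snc_dual_feasible A orig dest mu' pii' lam' \<longrightarrow>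
        snc_dual_obj A u dem y pii' lam' \<le> snc_dual_obj A u dem y pii lam)"

end

theory Submission
  imports Defs "HOL-Analysis.Analysis"
begin


definition inflow :: "('n \<times> 'n) set \<Rightarrow> ('n \<times> 'n \<Rightarrow> real) \<Rightarrow> 'n \<Rightarrow> real" where
  "inflow E x i = (\<Sum>a \<in> {a \<in> E. snd a = i}. x a)"
definition outflow :: "('n \<times> 'n) set \<Rightarrow> ('n \<times> 'n \<Rightarrow> real) \<Rightarrow> 'n \<Rightarrow> real" where
  "outflow E x i = (\<Sum>a \<in> {a \<in> E. fst a = i}. x a)"

definition flows where
  "flows E cap M = {x. (\<forall>a\<in>E. 0 \<le> x a \<and> x a \<le> cap a) \<and> (\<forall>a. a \<notin> E \<longrightarrow> x a = 0) \<and>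
      (\<forall>i\<in>M. inflow E x i = outflow E x i)}"

lemma maxflow_exists:
  fixes E :: "('n \<times> 'n) set"
  assumes fin: "finite E" and cap: "\<forall>a\<in>E. 0 \<le> cap a"
  shows "\<exists>x\<in>flows E cap M. \<forall>y\<in>flows E cap M. inflow E y d \<le> inflow E x d"
proof -
  define K where "K = PiE UNIV (\<lambda>a. if a \<in> E then {0..cap a} else {0::real})"
  have "compactin (product_topology (\<lambda>_. euclidean) UNIV) K"
    unfolding K_def compactin_PiE by auto
  hence cK: "compact K" by (simp add: euclidean_product_topology)
  have cont: "continuous_on UNIV (\<lambda>x. inflow E x i)" "continuous_on UNIV (\<lambda>x. outflow E x i)" for i
    unfolding inflow_def outflow_def by (auto intro!: continuous_intros)
  have clC: "closed {x. \<forall>i\<in>M. inflow E x i = outflow E x i}"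
    unfolding Ball_def by (intro closed_Collect_all closed_Collect_imp closed_Collect_eq open_Collect_const) (use cont in auto)
  have eq: "flows E cap M = K \<inter> {x. \<forall>i\<in>M. inflow E x i = outflow E x i}"
    unfolding flows_def K_def by (auto simp: PiE_iff split: if_splits)
  have "compact (flows E cap M)" unfolding eq using cK clC by auto
  moreover have "(\<lambda>_. 0) \<in> flows E cap M" using cap unfolding flows_def inflow_def outflow_def by auto
  ultimately show ?thesis
    using continuous_attains_sup[of "flows E cap M" "\<lambda>x. inflow E x d"] cont(1)
    using continuous_on_subset[OF cont(1)[of d], of "flows E cap M"] by blast
qed

lemma inflow_add:
  assumes "finite E" "b \<in> E"
  shows "inflow E (\<lambda>a. D a + s * indicator {b} a) i = inflow E D i + (if snd b = i then s else 0)"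
  using assms unfolding inflow_def by (auto simp: sum.distrib indicator_def sum.delta)

lemma outflow_add:
  assumes "finite E" "b \<in> E"
  shows "outflow E (\<lambda>a. D a + s * indicator {b} a) i = outflow E D i + (if fst b = i then s else 0)"
  using assms unfolding outflow_def by (auto simp: sum.distrib indicator_def sum.delta)

definition res where
  "res E cap x = {(q,r). ((q,r)\<in>E \<and> x(q,r) < cap(q,r)) \<or> ((r,q)\<in>E \<and> 0 < x(r,q))}"

lemma aug_path:
  assumes fin: "finite E" and reach: "(src, r) \<in> (res E cap x)\<^sup>*"
  shows "\<exists>D. (\<forall>a. a\<notin>E \<longrightarrow> D a = 0) \<and> (\<forall>a\<in>E. (D a > 0 \<longrightarrow> x a < cap a) \<and> (D a < 0 \<longrightarrow> 0 < x a)) \<and>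
    (\<forall>i. i \<noteq> src \<longrightarrow> i \<noteq> r \<longrightarrow> inflow E D i - outflow E D i = 0) \<and>
    (r \<noteq> src \<longrightarrow> inflow E D r - outflow E D r = 1)"
  using reach
proof (induction rule: rtrancl_induct)
  case base
  show ?case by (rule exI[of _ "\<lambda>_. 0"]) (auto simp: inflow_def outflow_def)
next
  case (step q r)
  from step.IH obtain D where DD: "(\<forall>a. a\<notin>E \<longrightarrow> D a = 0) \<and> (\<forall>a\<in>E. (D a > 0 \<longrightarrow> x a < cap a) \<and> (D a < 0 \<longrightarrow> 0 < x a)) \<and>
    (\<forall>i. i \<noteq> src \<longrightarrow> i \<noteq> q \<longrightarrow> inflow E D i - outflow E D i = 0) \<and>
    (q \<noteq> src \<longrightarrow> inflow E D q - outflow E D q = 1)" by (rule exE)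
  note D1 = DD[THEN conjunct1] and D2 = DD[THEN conjunct2, THEN conjunct1]
    and D3 = DD[THEN conjunct2, THEN conjunct2, THEN conjunct1] and D4 = DD[THEN conjunct2, THEN conjunct2, THEN conjunct2]
  have ex: "\<exists>b (s::real). b \<in> E \<and> (s = 1 \<or> s = -1) \<and> (s = 1 \<longrightarrow> b = (q,r) \<and> x b < cap b)
             \<and> (s = -1 \<longrightarrow> b = (r,q) \<and> 0 < x b)"
  proof -
    have "((q,r)\<in>E \<and> x(q,r) < cap(q,r)) \<or> ((r,q)\<in>E \<and> 0 < x(r,q))" using step(2) unfolding res_def by auto
    then show ?thesis
    proof
      assume h: "(q,r)\<in>E \<and> x(q,r) < cap(q,r)"
      show ?thesis by (rule exI[of _ "(q,r)"], rule exI[of _ 1]) (use h in auto)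
    next
      assume h: "(r,q)\<in>E \<and> 0 < x(r,q)"
      show ?thesis by (rule exI[of _ "(r,q)"], rule exI[of _ "-1"]) (use h in auto)
    qed
  qed
  then obtain b and s :: real where b: "b \<in> E" "s = 1 \<or> s = -1" "s = 1 \<longrightarrow> b = (q,r) \<and> x b < cap b"
    "s = -1 \<longrightarrow> b = (r,q) \<and> 0 < x b" by blast
  define D' where "D' = (\<lambda>a. D a + s * indicator {b} a)"
  have exc: "inflow E D' i - outflow E D' i = inflow E D i - outflow E D i + (if i = r then 1 else 0) - (if i = q then 1 else 0)" for i
    unfolding D'_def inflow_add[OF fin b(1)] outflow_add[OF fin b(1)] using b(2-4) by (elim disjE) auto
  show ?case
  proof (rule exI[of _ D'], intro conjI allI impI ballI)
    fix a assume aE: "a \<notin> E"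
    then have "a \<noteq> b" using b(1) by auto
    then show "D' a = 0" using D1[rule_format, OF aE] unfolding D'_def by simp
  next
    fix a assume a: "a \<in> E" "0 < D' a" show "x a < cap a"
    proof (cases "a = b")
      case True
      then show ?thesis using a D2 b(2-4) unfolding D'_def by (elim disjE) auto
    next
      case False
      then show ?thesis using a D2 unfolding D'_def by simp
    qed
  next
    fix a assume a: "a \<in> E" "D' a < 0" show "0 < x a"
    proof (cases "a = b")
      case True
      then show ?thesis using a D2 b(2-4) unfolding D'_def by (elim disjE) auto
    next
      case False
      then show ?thesis using a D2 unfolding D'_def by simp
    qed
  next
    fix i assume "i \<noteq> src" "i \<noteq> r" thus "inflow E D' i - outflow E D' i = 0"
      using exc[of i] D3 D4 by (cases "i = q") auto
  next
    assume "r \<noteq> src" thus "inflow E D' r - outflow E D' r = 1"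
      using exc[of r] D3 D4 by (cases "r = q") auto
  qed
qed


lemma inflow_lin: "finite E \<Longrightarrow> inflow E (\<lambda>a. x a + e * D a) i = inflow E x i + e * inflow E D i"
  unfolding inflow_def by (simp add: sum.distrib sum_distrib_left)
lemma outflow_lin: "finite E \<Longrightarrow> outflow E (\<lambda>a. x a + e * D a) i = outflow E x i + e * outflow E D i"
  unfolding outflow_def by (simp add: sum.distrib sum_distrib_left)

lemma augment:
  assumes fin: "finite E" and x: "x \<in> flows E cap M" and M: "src \<notin> M" "t \<notin> M"
    and noout: "\<forall>a\<in>E. fst a \<noteq> t" and reach: "(src, t) \<in> (res E cap x)\<^sup>*" and ts: "t \<noteq> src"
  shows "\<exists>x'\<in>flows E cap M. inflow E x' t > inflow E x t"
proof -
  obtain D where D1: "\<forall>a. a\<notin>E \<longrightarrow> D a = 0"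
    and D2: "\<forall>a\<in>E. (D a > 0 \<longrightarrow> x a < cap a) \<and> (D a < 0 \<longrightarrow> 0 < x a)"
    and D3: "\<forall>i. i \<noteq> src \<longrightarrow> i \<noteq> t \<longrightarrow> inflow E D i - outflow E D i = 0"
    and D4: "t \<noteq> src \<longrightarrow> inflow E D t - outflow E D t = 1"
    using aug_path[OF fin reach] by blast
  have xb: "\<forall>a\<in>E. 0 \<le> x a \<and> x a \<le> cap a" "\<forall>a. a \<notin> E \<longrightarrow> x a = 0"
    "\<forall>i\<in>M. inflow E x i = outflow E x i" using x unfolding flows_def by auto
  define ea where "ea a = (if D a > 0 then (cap a - x a) / D a else if D a < 0 then x a / (- D a) else 1)" for a
  have eapos: "ea a > 0" if "a \<in> E" for a
    using D2 that unfolding ea_def by (auto simp: divide_pos_neg)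
  define e where "e = Min (insert 1 (ea ` E))"
  have epos: "e > 0" unfolding e_def using fin eapos by (subst Min_gr_iff) auto
  have ele: "e \<le> ea a" if "a \<in> E" for a unfolding e_def using fin that by (intro Min_le) auto
  define x' where "x' = (\<lambda>a. x a + e * D a)"
  have "x' \<in> flows E cap M"
    unfolding flows_def
  proof (intro CollectI conjI ballI allI impI)
    fix a assume a: "a \<in> E"
    have b1: "0 \<le> x a" "x a \<le> cap a" using xb a by auto
    have le: "e \<le> ea a" using ele a .
    show "0 \<le> x' a"
    proof (cases "D a < 0")
      case True
      then have "e * (- D a) \<le> x a" using le unfolding ea_def by (simp add: field_simps)
      then show ?thesis unfolding x'_def by simp
    next
      case False
      then show ?thesis unfolding x'_def using b1 epos by simp
    qed
    show "x' a \<le> cap a"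
    proof (cases "D a > 0")
      case True
      then have "e * D a \<le> cap a - x a" using le unfolding ea_def by (simp add: field_simps)
      then show ?thesis unfolding x'_def by simp
    next
      case False
      then have "e * D a \<le> 0" using epos by (simp add: mult_nonneg_nonpos)
      then show ?thesis unfolding x'_def using b1 by simp
    qed
  next
    fix a assume aE: "a \<notin> E" then show "x' a = 0" unfolding x'_def using xb(2)[rule_format, OF aE] D1[rule_format, OF aE] by simp
  next
    fix i assume i: "i \<in> M"
    then have "inflow E D i - outflow E D i = 0" using D3 M by auto
    then show "inflow E x' i = outflow E x' i" unfolding x'_def inflow_lin[OF fin] outflow_lin[OF fin]
      using xb(3) i by simp
  qed
  moreover have emp: "{a \<in> E. fst a = t} = {}" using noout by auto
  have "outflow E D t = 0" unfolding outflow_def emp by simp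
  then have "inflow E D t = 1" using D4 ts by simp
  then have "inflow E x' t > inflow E x t" unfolding x'_def inflow_lin[OF fin] using epos by simp
  ultimately show ?thesis by blast
qed


lemma sum_in_U:
  assumes "finite E" "finite U"
  shows "(\<Sum>i\<in>U. inflow E x i) = (\<Sum>a\<in>E. if snd a \<in> U then x a else 0)"
    and "(\<Sum>i\<in>U. outflow E x i) = (\<Sum>a\<in>E. if fst a \<in> U then x a else 0)"
proof -
  have "(\<Sum>i\<in>U. inflow E x i) = (\<Sum>i\<in>U. \<Sum>a\<in>E. if snd a = i then x a else 0)"
    unfolding inflow_def using assms by (simp add: sum.inter_filter)
  also have "\<dots> = (\<Sum>a\<in>E. \<Sum>i\<in>U. if snd a = i then x a else 0)" by (rule sum.swap)
  also have "\<dots> = (\<Sum>a\<in>E. if snd a \<in> U then x a else 0)" using assms by (simp add: sum.delta)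
  finally show "(\<Sum>i\<in>U. inflow E x i) = (\<Sum>a\<in>E. if snd a \<in> U then x a else 0)" .
  have "(\<Sum>i\<in>U. outflow E x i) = (\<Sum>i\<in>U. \<Sum>a\<in>E. if fst a = i then x a else 0)"
    unfolding outflow_def using assms by (simp add: sum.inter_filter)
  also have "\<dots> = (\<Sum>a\<in>E. \<Sum>i\<in>U. if fst a = i then x a else 0)" by (rule sum.swap)
  also have "\<dots> = (\<Sum>a\<in>E. if fst a \<in> U then x a else 0)" using assms by (simp add: sum.delta)
  finally show "(\<Sum>i\<in>U. outflow E x i) = (\<Sum>a\<in>E. if fst a \<in> U then x a else 0)" .
qed

lemma cut_value:
  assumes fin: "finite N" and EN: "E \<subseteq> N \<times> N" and x: "x \<in> flows E cap (N - {src, t})"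
    and W: "W \<subseteq> N" "src \<in> W" "t \<notin> W" "t \<in> N" and noout: "\<forall>a\<in>E. fst a \<noteq> t"
  shows "inflow E x t = (\<Sum>a\<in>{a\<in>E. fst a \<in> W \<and> snd a \<notin> W}. x a) - (\<Sum>a\<in>{a\<in>E. fst a \<notin> W \<and> snd a \<in> W}. x a)"
proof -
  have finE: "finite E" using fin EN finite_subset by blast
  define U where "U = N - W"
  have finU: "finite U" using fin U_def by simp
  have tU: "t \<in> U" using W U_def by simp
  have cons: "inflow E x i = outflow E x i" if "i \<in> U" "i \<noteq> t" for i
    using x that W unfolding flows_def U_def by auto
  have emp: "{a \<in> E. fst a = t} = {}" using noout by auto
  have out0: "outflow E x t = 0" unfolding outflow_def emp by simp
  have "(\<Sum>i\<in>U. inflow E x i - outflow E x i) = (inflow E x t - outflow E x t) + (\<Sum>i\<in>U-{t}. inflow E x i - outflow E x i)"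
    using finU tU by (simp add: sum.remove)
  also have "(\<Sum>i\<in>U-{t}. inflow E x i - outflow E x i) = 0" using cons by (intro sum.neutral) auto
  finally have "inflow E x t = (\<Sum>i\<in>U. inflow E x i) - (\<Sum>i\<in>U. outflow E x i)"
    using out0 by (simp add: sum_subtractf)
  also have "\<dots> = (\<Sum>a\<in>E. (if snd a \<in> U then x a else 0) - (if fst a \<in> U then x a else 0))"
    unfolding sum_in_U[OF finE finU] by (simp add: sum_subtractf)
  also have "\<dots> = (\<Sum>a\<in>E. (if fst a \<in> W \<and> snd a \<notin> W then x a else 0) - (if fst a \<notin> W \<and> snd a \<in> W then x a else 0))"
    using EN by (intro sum.cong) (auto simp: U_def)
  also have "\<dots> = (\<Sum>a\<in>{a\<in>E. fst a \<in> W \<and> snd a \<notin> W}. x a) - (\<Sum>a\<in>{a\<in>E. fst a \<notin> W \<and> snd a \<in> W}. x a)"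
    using finE by (simp add: sum_subtractf sum.inter_filter)
  finally show ?thesis .
qed


lemma mfmc:
  assumes fin: "finite N" and EN: "E \<subseteq> N \<times> N" and st: "src \<in> N" "t \<in> N" "src \<noteq> t"
    and noout: "\<forall>a\<in>E. fst a \<noteq> t" and cap: "\<forall>a\<in>E. 0 \<le> cap a"
    and cuts: "\<forall>W. W \<subseteq> N \<longrightarrow> src \<in> W \<longrightarrow> t \<notin> W \<longrightarrow> dem \<le> (\<Sum>a\<in>{a\<in>E. fst a \<in> W \<and> snd a \<notin> W}. cap a)"
  shows "\<exists>x\<in>flows E cap (N - {src, t}). dem \<le> inflow E x t"
proof -
  have finE: "finite E" using fin EN finite_subset by blast
  obtain x where x: "x \<in> flows E cap (N - {src, t})"
    and xmax: "\<forall>y\<in>flows E cap (N - {src, t}). inflow E y t \<le> inflow E x t"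
    using maxflow_exists[OF finE cap] by blast
  have xb: "\<forall>a\<in>E. 0 \<le> x a \<and> x a \<le> cap a" using x unfolding flows_def by auto
  show ?thesis
  proof (rule ccontr)
    assume "\<not> ?thesis"
    then have lt: "inflow E x t < dem" using x by force
    show False
    proof (cases "(src, t) \<in> (res E cap x)\<^sup>*")
      case True
      from augment[OF finE x _ _ noout True] st obtain x' where
        "x' \<in> flows E cap (N - {src, t})" "inflow E x' t > inflow E x t" by auto
      then show False using xmax by force
    next
      case False
      define W where "W = {r \<in> N. (src, r) \<in> (res E cap x)\<^sup>*}"
      have W: "W \<subseteq> N" "src \<in> W" "t \<notin> W" using st False unfolding W_def by auto
      have fwd: "x a = cap a" if "a \<in> {a\<in>E. fst a \<in> W \<and> snd a \<notin> W}" for a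
      proof (rule ccontr)
        assume ne: "x a \<noteq> cap a"
        obtain i j where a: "a = (i,j)" by force
        have "(i,j) \<in> E" "i \<in> W" "j \<notin> W" using that a by auto
        moreover have "x (i,j) < cap (i,j)" using xb ne a \<open>(i,j) \<in> E\<close> by force
        ultimately have "(i,j) \<in> res E cap x" unfolding res_def by auto
        moreover have "(src, i) \<in> (res E cap x)\<^sup>*" using \<open>i \<in> W\<close> unfolding W_def by auto
        ultimately have "(src, j) \<in> (res E cap x)\<^sup>*" by (meson rtrancl_into_rtrancl)
        moreover have "j \<in> N" using EN \<open>(i,j) \<in> E\<close> by auto
        ultimately show False using \<open>j \<notin> W\<close> unfolding W_def by auto
      qed
      have bwd: "x a = 0" if "a \<in> {a\<in>E. fst a \<notin> W \<and> snd a \<in> W}" for a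
      proof (rule ccontr)
        assume ne: "x a \<noteq> 0"
        obtain j i where a: "a = (j,i)" by force
        have "(j,i) \<in> E" "i \<in> W" "j \<notin> W" using that a by auto
        moreover have "0 < x (j,i)" using xb ne a \<open>(j,i) \<in> E\<close> by force
        ultimately have "(i,j) \<in> res E cap x" unfolding res_def by auto
        moreover have "(src, i) \<in> (res E cap x)\<^sup>*" using \<open>i \<in> W\<close> unfolding W_def by auto
        ultimately have "(src, j) \<in> (res E cap x)\<^sup>*" by (meson rtrancl_into_rtrancl)
        moreover have "j \<in> N" using EN \<open>(j,i) \<in> E\<close> by auto
        ultimately show False using \<open>j \<notin> W\<close> unfolding W_def by auto
      qed
      have "inflow E x t = (\<Sum>a\<in>{a\<in>E. fst a \<in> W \<and> snd a \<notin> W}. x a) - (\<Sum>a\<in>{a\<in>E. fst a \<notin> W \<and> snd a \<in> W}. x a)"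
        using cut_value[OF fin EN x W st(2) noout] .
      also have "\<dots> = (\<Sum>a\<in>{a\<in>E. fst a \<in> W \<and> snd a \<notin> W}. cap a)"
        using fwd bwd by simp
      finally have eqv: "inflow E x t = (\<Sum>a\<in>{a\<in>E. fst a \<in> W \<and> snd a \<notin> W}. cap a)" .
      have "dem \<le> (\<Sum>a\<in>{a\<in>E. fst a \<in> W \<and> snd a \<notin> W}. cap a)" using cuts W by blast
      then show False using eqv lt by linarith
    qed
  qed
qed



lemma ind_integrable: "integrable lborel (indicator {a..<b::real} :: real \<Rightarrow> real)"
proof (cases "a \<le> b")
  case True then show ?thesis by (intro integrable_real_indicator) auto
next
  case False then have "{a..<b} = {}" by auto
  then show ?thesis by simp
qed

lemma ind_integral: "(LINT \<tau>|lborel. (indicator {a..<b::real} \<tau> :: real)) = max 0 (b - a)"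
proof (cases "a \<le> b")
  case True then show ?thesis by simp
next
  case False then have "{a..<b} = {}" by auto
  then show ?thesis using False by simp
qed


lemma key_bound:
  fixes nu :: "'n \<Rightarrow> real" and A :: "('n \<times> 'n) set" and c :: "'n \<times> 'n \<Rightarrow> real"
  assumes finA: "finite A" and AN: "A \<subseteq> N \<times> N" and c: "\<forall>a\<in>A. 0 \<le> c a" and R: "0 \<le> R" and lam: "0 \<le> lam"
    and nus: "nu src = 0" and nut: "nu t = lam" and st: "src \<in> N" "t \<in> N"
    and cutsR: "\<forall>W. W \<subseteq> N \<longrightarrow> src \<in> W \<longrightarrow> t \<notin> W \<longrightarrow>
       dem - (\<Sum>a\<in>{(i,j)\<in>A. i \<in> W \<and> j \<notin> W}. c a) \<le> R * (real (card {(i,j)\<in>A. i \<in> W \<and> j \<notin> W}) + 1)"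
  shows "dem * lam - (\<Sum>a\<in>A. c a * max 0 (nu (snd a) - nu (fst a)))
         \<le> R * ((\<Sum>a\<in>A. max 0 (nu (snd a) - nu (fst a))) + lam)"
proof -
  define g where "g \<tau> = (\<Sum>a\<in>A. (R + c a) * indicator {nu (fst a)..<nu (snd a)} \<tau>) - (dem - R) * indicator {0..<lam} \<tau>" for \<tau> :: real
  have int: "(LINT \<tau>|lborel. g \<tau>) = (\<Sum>a\<in>A. (R + c a) * max 0 (nu (snd a) - nu (fst a))) - (dem - R) * lam"
  proof -
    have i1: "integrable lborel (\<lambda>\<tau>. (R + c a) * indicator {nu (fst a)..<nu (snd a)} \<tau> :: real)" for a
      by (intro integrable_mult_right ind_integrable)
    have i2: "integrable lborel (\<lambda>\<tau>. (dem - R) * indicator {0..<lam} \<tau> :: real)"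
      by (intro integrable_mult_right ind_integrable)
    have i3: "integrable lborel (\<lambda>\<tau>. \<Sum>a\<in>A. (R + c a) * indicator {nu (fst a)..<nu (snd a)} \<tau> :: real)"
      using i1 by (intro Bochner_Integration.integrable_sum) auto
    have "(LINT \<tau>|lborel. g \<tau>) = (LINT \<tau>|lborel. (\<Sum>a\<in>A. (R + c a) * indicator {nu (fst a)..<nu (snd a)} \<tau>))
       - (LINT \<tau>|lborel. (dem - R) * indicator {0..<lam} \<tau>)"
      unfolding g_def by (rule Bochner_Integration.integral_diff[OF i3 i2])
    also have "(LINT \<tau>|lborel. (\<Sum>a\<in>A. (R + c a) * indicator {nu (fst a)..<nu (snd a)} \<tau>))
       = (\<Sum>a\<in>A. LINT \<tau>|lborel. (R + c a) * indicator {nu (fst a)..<nu (snd a)} \<tau>)"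
      by (rule Bochner_Integration.integral_sum[of A _ "\<lambda>a \<tau>. (R + c a) * indicator {nu (fst a)..<nu (snd a)} \<tau>"]) (rule i1)
    also have "\<dots> = (\<Sum>a\<in>A. (R + c a) * max 0 (nu (snd a) - nu (fst a)))"
      by (intro sum.cong refl) (simp only: integral_mult_right_zero ind_integral)
    also have "(LINT \<tau>|lborel. (dem - R) * indicator {0..<lam} \<tau>) = (dem - R) * lam"
      using lam by (simp only: integral_mult_right_zero ind_integral) simp
    finally show ?thesis .
  qed
  have gpos: "0 \<le> g \<tau>" for \<tau>
  proof (cases "\<tau> \<in> {0..<lam}")
    case False
    then show ?thesis unfolding g_def using R c by (auto intro!: sum_nonneg)
  next
    case True
    define W where "W = {i \<in> N. nu i \<le> \<tau>}"
    define C where "C = {(i,j)\<in>A. i \<in> W \<and> j \<notin> W}"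
    have W: "W \<subseteq> N" "src \<in> W" "t \<notin> W" using True st nus nut unfolding W_def by auto
    have CP: "C = {a\<in>A. nu (fst a) \<le> \<tau> \<and> \<tau> < nu (snd a)}"
      unfolding C_def W_def using AN by auto
    have "(\<Sum>a\<in>A. (R + c a) * indicator {nu (fst a)..<nu (snd a)} \<tau>)
        = (\<Sum>a\<in>A. if nu (fst a) \<le> \<tau> \<and> \<tau> < nu (snd a) then R + c a else 0)"
      by (intro sum.cong) (auto simp: indicator_def)
    also have "\<dots> = (\<Sum>a\<in>C. R + c a)" unfolding CP using finA by (simp add: sum.inter_filter)
    also have "\<dots> = R * real (card C) + (\<Sum>a\<in>C. c a)" by (simp add: sum.distrib)
    finally have eq: "(\<Sum>a\<in>A. (R + c a) * indicator {nu (fst a)..<nu (snd a)} \<tau>) = R * real (card C) + (\<Sum>a\<in>C. c a)" .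
    have "dem - (\<Sum>a\<in>C. c a) \<le> R * (real (card C) + 1)" using cutsR W unfolding C_def by blast
    then show ?thesis unfolding g_def eq using True by (simp add: algebra_simps)
  qed
  have "0 \<le> (LINT \<tau>|lborel. g \<tau>)" using gpos by (simp add: integral_nonneg)
  then have "0 \<le> (\<Sum>a\<in>A. (R + c a) * max 0 (nu (snd a) - nu (fst a))) - (dem - R) * lam" using int by simp
  then show ?thesis by (simp add: algebra_simps sum.distrib sum_distrib_left)
qed

theorem theorem3:
  fixes N :: "'n set" and A :: "('n \<times> 'n) set" and u :: "'n \<times> 'n \<Rightarrow> real"
    and orig dest :: 'n and dem :: real and ybar :: "'n \<times> 'n \<Rightarrow> real"
    and Cstar :: "('n \<times> 'n) set"
  assumes "finite N" and "A \<subseteq> N \<times> N"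
    and "orig \<in> N" and "dest \<in> N" and "orig \<noteq> dest"
    and "\<forall>a \<in> A. 0 \<le> u a"
    and "\<forall>a \<in> A. ybar a \<in> {0, 1}"
    and "0 \<le> dem"
    and "\<not> feasible N A u orig dest dem ybar"
    and "Cstar \<in> od_cuts N A orig dest"
    and "\<forall>C \<in> od_cuts N A orig dest. snc_ratio u dem ybar C \<le> snc_ratio u dem ybar Cstar"
  shows "\<exists>mu pii lam. snc_dual_optimal A u orig dest dem ybar mu pii lam \<and>
           (\<exists>c > 0. dem * lam = c * dem \<and>
              (\<forall>a \<in> A. u a * pii a = c * (u a * indicator Cstar a)))"
  proof -
  let ?E = "adm_arcs A orig dest"
  define cap where "cap a = u a * ybar a" for a
  note fin = assms(1) and AN = assms(2)
  have finA: "finite A" using fin AN finite_subset by blast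
  have EA: "?E \<subseteq> A" unfolding adm_arcs_def by auto
  have EN: "?E \<subseteq> N \<times> N" using EA AN by auto
  have capnn: "\<forall>a\<in>A. 0 \<le> cap a" using assms(6,7) unfolding cap_def by auto
  have noout: "\<forall>a\<in>?E. fst a \<noteq> dest" unfolding adm_arcs_def by auto
  have cutE: "{a\<in>?E. fst a \<in> W \<and> snd a \<notin> W} = {(i,j)\<in>A. i \<in> W \<and> j \<notin> W}"
    if "orig \<in> W" "dest \<notin> W" for W
    using that unfolding adm_arcs_def by auto
  have cutin: "{(i,j)\<in>A. i \<in> W \<and> j \<notin> W} \<in> od_cuts N A orig dest"
    if "W \<subseteq> N" "orig \<in> W" "dest \<notin> W" for W
    using that unfolding od_cuts_def by blast
  have "\<exists>W. W \<subseteq> N \<and> orig \<in> W \<and> dest \<notin> W \<and> (\<Sum>a\<in>{(i,j)\<in>A. i \<in> W \<and> j \<notin> W}. cap a) < dem"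
  proof (rule ccontr)
    assume nt: "\<not> ?thesis"
    have cuts: "\<forall>W. W \<subseteq> N \<longrightarrow> orig \<in> W \<longrightarrow> dest \<notin> W \<longrightarrow> dem \<le> (\<Sum>a\<in>{a\<in>?E. fst a \<in> W \<and> snd a \<notin> W}. cap a)"
    proof (intro allI impI)
      fix W assume W: "W \<subseteq> N" "orig \<in> W" "dest \<notin> W"
      have "\<not> (\<Sum>a\<in>{(i,j)\<in>A. i \<in> W \<and> j \<notin> W}. cap a) < dem" using nt W by blast
      then show "dem \<le> (\<Sum>a\<in>{a\<in>?E. fst a \<in> W \<and> snd a \<notin> W}. cap a)" unfolding cutE[OF W(2,3)] by simp
    qed
    obtain x where x: "x \<in> flows ?E cap (N - {orig, dest})" and v: "dem \<le> inflow ?E x dest"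
      using mfmc[OF fin EN assms(3,4,5) noout _ cuts] capnn EA by blast
    have "feasible N A u orig dest dem ybar"
      unfolding feasible_def
      by (rule exI[of _ x]) (use x v in \<open>auto simp: flows_def inflow_def outflow_def cap_def\<close>)
    then show False using assms(9) by blast
  qed
  then obtain W0 where W0: "W0 \<subseteq> N" "orig \<in> W0" "dest \<notin> W0"
    and W0c: "(\<Sum>a\<in>{(i,j)\<in>A. i \<in> W0 \<and> j \<notin> W0}. cap a) < dem" by blast
  define R where "R = snc_ratio u dem ybar Cstar"
  have "0 < snc_ratio u dem ybar {(i,j)\<in>A. i \<in> W0 \<and> j \<notin> W0}"
    unfolding snc_ratio_def using W0c unfolding cap_def by (intro divide_pos_pos) auto
  then have Rpos: "0 < R" unfolding R_def using assms(11) cutin[OF W0] by force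
  have cutsR: "\<forall>W. W \<subseteq> N \<longrightarrow> orig \<in> W \<longrightarrow> dest \<notin> W \<longrightarrow>
       dem - (\<Sum>a\<in>{(i,j)\<in>A. i \<in> W \<and> j \<notin> W}. cap a) \<le> R * (real (card {(i,j)\<in>A. i \<in> W \<and> j \<notin> W}) + 1)"
  proof (intro allI impI)
    fix W assume W: "W \<subseteq> N" "orig \<in> W" "dest \<notin> W"
    let ?C = "{(i,j)\<in>A. i \<in> W \<and> j \<notin> W}"
    have "snc_ratio u dem ybar ?C \<le> R" unfolding R_def using assms(11) cutin[OF W] by blast
    then show "dem - (\<Sum>a\<in>?C. cap a) \<le> R * (real (card ?C) + 1)"
      unfolding snc_ratio_def cap_def by (simp add: divide_le_eq add_pos_nonneg)
  qed
  obtain Ws where Ws: "Ws \<subseteq> N" "orig \<in> Ws" "dest \<notin> Ws" and CsW: "Cstar = {(i,j)\<in>A. i \<in> Ws \<and> j \<notin> Ws}"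
    using assms(10) unfolding od_cuts_def by blast
  have CsA: "Cstar \<subseteq> A" using CsW by auto
  define lam0 where "lam0 = 1 / (real (card Cstar) + 1)"
  define mu0 where "mu0 i = (if i \<in> Ws then 0 else lam0)" for i
  define pii0 where "pii0 a = lam0 * indicator Cstar a" for a
  have lam0pos: "0 < lam0" unfolding lam0_def by (simp add: add_pos_nonneg)
  have sumind: "(\<Sum>a\<in>A. f a * indicator Cstar a) = (\<Sum>a\<in>Cstar. f a)" for f :: "'n \<times> 'n \<Rightarrow> real"
  proof -
    have "(\<Sum>a\<in>A. f a * indicator Cstar a) = (\<Sum>a\<in>A. if a \<in> Cstar then f a else 0)"
      by (intro sum.cong) (auto simp: indicator_def)
    also have "\<dots> = (\<Sum>a\<in>A \<inter> Cstar. f a)" using finA by (simp add: sum.inter_restrict)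
    also have "A \<inter> Cstar = Cstar" using CsA by auto
    finally show ?thesis .
  qed
  have feas0: "snc_dual_feasible A orig dest mu0 pii0 lam0"
    unfolding snc_dual_feasible_def
  proof (intro conjI ballI)
    show "mu0 orig = 0" using Ws unfolding mu0_def by simp
    show "mu0 dest = lam0" using Ws unfolding mu0_def by simp
    show "0 \<le> lam0" using lam0pos by simp
    fix a assume "a \<in> A" then show "0 \<le> pii0 a" using lam0pos unfolding pii0_def by simp
  next
    fix a assume a: "a \<in> ?E"
    obtain i j where ij: "a = (i,j)" by force
    have "(i,j) \<in> A" using a ij EA by auto
    have "mu0 j - mu0 i \<le> pii0 (i,j)"
    proof (cases "i \<in> Ws \<and> j \<notin> Ws")
      case True
      then have "(i,j) \<in> Cstar" using CsW \<open>(i,j) \<in> A\<close> by auto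
      then show ?thesis using True unfolding mu0_def pii0_def by simp
    next
      case False
      then have "mu0 j - mu0 i \<le> 0" unfolding mu0_def using lam0pos by auto
      also have "0 \<le> pii0 (i,j)" unfolding pii0_def using lam0pos by simp
      finally show ?thesis .
    qed
    then show "case a of (i, j) \<Rightarrow> mu0 j - mu0 i \<le> pii0 (i, j)" using ij by simp
  next
    have "(\<Sum>a\<in>A. pii0 a) = lam0 * real (card Cstar)"
      unfolding pii0_def using sumind[of "\<lambda>_. lam0"] by simp
    then show "(\<Sum>a\<in>A. pii0 a) + lam0 \<le> 1" unfolding lam0_def by (simp add: field_simps)
  qed
  have obj0: "snc_dual_obj A u dem ybar pii0 lam0 = R"
  proof -
    have "(\<Sum>a\<in>A. u a * ybar a * pii0 a) = lam0 * (\<Sum>a\<in>Cstar. u a * ybar a)"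
      unfolding pii0_def using sumind[of "\<lambda>a. lam0 * (u a * ybar a)"]
      by (simp add: sum_distrib_left mult.commute mult.left_commute)
    then show ?thesis unfolding snc_dual_obj_def R_def snc_ratio_def lam0_def by (simp add: field_simps)
  qed
  have opt: "snc_dual_obj A u dem ybar pii' lam' \<le> R" if f: "snc_dual_feasible A orig dest mu' pii' lam'" for mu' pii' lam'
  proof -
    have f1: "mu' orig = 0" "mu' dest = lam'" "0 \<le> lam'" "\<forall>a\<in>A. 0 \<le> pii' a"
      "\<forall>(i,j)\<in>?E. mu' j - mu' i \<le> pii' (i,j)" "(\<Sum>a\<in>A. pii' a) + lam' \<le> 1"
      using f unfolding snc_dual_feasible_def by auto
    define nu where "nu i = min lam' (max 0 (mu' i))" for i
    define p where "p a = max 0 (nu (snd a) - nu (fst a))" for a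
    have nus: "nu orig = 0" and nut: "nu dest = lam'" using f1 unfolding nu_def by auto
    have nub: "0 \<le> nu i" "nu i \<le> lam'" for i using f1(3) unfolding nu_def by auto
    have ple: "p a \<le> pii' a" if a: "a \<in> A" for a
    proof -
      obtain i j where ij: "a = (i,j)" by force
      show ?thesis
      proof (cases "a \<in> ?E")
        case True
        then have "mu' j - mu' i \<le> pii' (i,j)" using f1(5) ij by auto
        moreover have "0 \<le> pii' (i,j)" using f1(4) a ij by auto
        ultimately show ?thesis unfolding p_def nu_def ij using f1(3) by (auto simp: min_def max_def)
      next
        case False
        then have "j = orig \<or> i = dest" using a ij unfolding adm_arcs_def by auto
        then have "p a = 0" unfolding p_def ij using nus nut nub by auto
        then show ?thesis using f1(4) a by simp
      qed
    qed
    have cnn: "\<forall>a\<in>A. 0 \<le> cap a" using capnn .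
    have kb: "dem * lam' - (\<Sum>a\<in>A. cap a * p a) \<le> R * ((\<Sum>a\<in>A. p a) + lam')"
      using key_bound[OF finA AN cnn less_imp_le[OF Rpos] f1(3) nus nut assms(3,4) cutsR] unfolding p_def .
    have s1: "(\<Sum>a\<in>A. cap a * p a) \<le> (\<Sum>a\<in>A. cap a * pii' a)"
      using ple cnn by (intro sum_mono mult_left_mono) auto
    have s2: "(\<Sum>a\<in>A. p a) \<le> (\<Sum>a\<in>A. pii' a)" using ple by (intro sum_mono) auto
    have "snc_dual_obj A u dem ybar pii' lam' = dem * lam' - (\<Sum>a\<in>A. cap a * pii' a)"
      unfolding snc_dual_obj_def cap_def by simp
    also have "\<dots> \<le> dem * lam' - (\<Sum>a\<in>A. cap a * p a)" using s1 by simp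
    also have "\<dots> \<le> R * ((\<Sum>a\<in>A. p a) + lam')" by (rule kb)
    also have "\<dots> \<le> R * ((\<Sum>a\<in>A. pii' a) + lam')" using s2 Rpos by (intro mult_left_mono) auto
    also have "\<dots> \<le> R * 1" using f1(6) Rpos by (intro mult_left_mono) auto
    finally show ?thesis by simp
  qed
  have "snc_dual_optimal A u orig dest dem ybar mu0 pii0 lam0"
    unfolding snc_dual_optimal_def using feas0 opt obj0 by auto
  moreover have "\<forall>a \<in> A. u a * pii0 a = lam0 * (u a * indicator Cstar a)"
    unfolding pii0_def by simp
  ultimately show ?thesis using lam0pos by (intro exI[of _ mu0] exI[of _ pii0] exI[of _ lam0]) auto
qed

end
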